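(* Let $n\in\mathbb{N}$, let $A$ be a $2n$-adically closed integral domain, and let $p,q$ be prime ideals of $A$. Regard the localizations $A_p$ and $A_q$ as subrings of $\mathrm{Frac}(A)$. Then the join $[A_p,A_q]$ is a local ring.
   Context: All rings are commutative with $1$. A ring $R$ is $k$-adically closed if every monic polynomial of degree $k$ with coefficients in $R$ has a root in $R$. For subrings $A,B$ of a ring $K$, the join $[A,B]$ is the smallest subring of $K$ containing both $A$ and $B$ (equivalently, the set of finite sums $\sum a_ib_i$ with $a_i\in A$, $b_i\in B$). *)

theory Defs
  imports "HOL-Computational_Algebra.Polynomial"
begin

text \<open>Rings are modelled as subrings of an ambient field of type 'a.
  A subring of a field is automatically an integral domain.\<close>

definition is_subring :: "'a::field set \<Rightarrow> bool" where
  "is_subring R \<longleftrightarrow> 0 \<in> R \<and> 1 \<in> R \<and>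
     (\<forall>x\<in>R. \<forall>y\<in>R. x + y \<in> R \<and> x - y \<in> R \<and> x * y \<in> R)"

definition is_ideal_of :: "'a::field set \<Rightarrow> 'a set \<Rightarrow> bool" where
  "is_ideal_of R I \<longleftrightarrow> I \<subseteq> R \<and> 0 \<in> I \<and>
     (\<forall>x\<in>I. \<forall>y\<in>I. x + y \<in> I \<and> x - y \<in> I) \<and>
     (\<forall>r\<in>R. \<forall>x\<in>I. r * x \<in> I)"

definition prime_ideal_of :: "'a::field set \<Rightarrow> 'a set \<Rightarrow> bool" where
  "prime_ideal_of R P \<longleftrightarrow> is_ideal_of R P \<and> 1 \<notin> P \<and>
     (\<forall>a\<in>R. \<forall>b\<in>R. a * b \<in> P \<longrightarrow> a \<in> P \<or> b \<in> P)"

definition maximal_ideal_of :: "'a::field set \<Rightarrow> 'a set \<Rightarrow> bool" where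
  "maximal_ideal_of R M \<longleftrightarrow> is_ideal_of R M \<and> M \<noteq> R \<and>
     (\<forall>I. is_ideal_of R I \<and> M \<subseteq> I \<longrightarrow> I = M \<or> I = R)"

definition local_subring :: "'a::field set \<Rightarrow> bool" where
  "local_subring R \<longleftrightarrow> (\<exists>!M. maximal_ideal_of R M)"

definition adically_closed :: "nat \<Rightarrow> 'a::field set \<Rightarrow> bool" where
  "adically_closed k R \<longleftrightarrow>
     (\<forall>f :: 'a poly. degree f = k \<and> lead_coeff f = 1 \<and> (\<forall>i. coeff f i \<in> R)
        \<longrightarrow> (\<exists>x\<in>R. poly f x = 0))"

definition localization :: "'a::field set \<Rightarrow> 'a set \<Rightarrow> 'a set" where
  "localization A P = {a / s | a s. a \<in> A \<and> s \<in> A \<and> s \<notin> P}"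

definition join_ring :: "'a::field set \<Rightarrow> 'a set \<Rightarrow> 'a set" where
  "join_ring A B = \<Inter>{R. is_subring R \<and> A \<subseteq> R \<and> B \<subseteq> R}"

end

theory Submission
  imports Defs
begin

lemma subring_sum:
  assumes "is_subring A" "finite S" "\<forall>i\<in>S. f i \<in> A"
  shows "sum f S \<in> A"
  using assms(2,3)
proof (induction S rule: finite_induct)
  case empty then show ?case using assms(1) by (simp add: is_subring_def)
next
  case (insert x F) then show ?case using assms(1) by (simp add: is_subring_def)
qed

lemma subring_coeff_mult:
  assumes "is_subring A" "\<forall>i. coeff p i \<in> A" "\<forall>i. coeff q i \<in> A"
  shows "coeff (p*q) i \<in> A"
  unfolding coeff_mult
  apply (rule subring_sum[OF assms(1)])
  using assms by (auto simp: is_subring_def)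

lemma subring_coeff_power:
  assumes "is_subring A" "\<forall>i. coeff p i \<in> A"
  shows "coeff (p^n) i \<in> A"
proof (induction n arbitrary: i)
  case 0 then show ?case using assms(1) by (simp add: is_subring_def)
next
  case (Suc n) then show ?case using subring_coeff_mult[OF assms(1) assms(2)] by simp
qed

lemma join_subring: "is_subring (join_ring X Y)"
  unfolding join_ring_def is_subring_def by auto
lemma join_sub1: "X \<subseteq> join_ring X Y" unfolding join_ring_def by auto
lemma join_sub2: "Y \<subseteq> join_ring X Y" unfolding join_ring_def by auto
lemma join_least: "is_subring T \<Longrightarrow> X \<subseteq> T \<Longrightarrow> Y \<subseteq> T \<Longrightarrow> join_ring X Y \<subseteq> T"
  unfolding join_ring_def by auto

lemma prime_props:
  assumes "prime_ideal_of A P"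
  shows "P \<subseteq> A" "0 \<in> P" "1 \<notin> P" "x\<in>P \<Longrightarrow> y\<in>P \<Longrightarrow> x+y\<in>P" "x\<in>P \<Longrightarrow> y\<in>P \<Longrightarrow> x-y\<in>P"
   "r\<in>A \<Longrightarrow> x\<in>P \<Longrightarrow> r*x\<in>P" "a\<in>A \<Longrightarrow> b\<in>A \<Longrightarrow> a*b\<in>P \<Longrightarrow> a\<in>P \<or> b\<in>P"
  using assms unfolding prime_ideal_of_def is_ideal_of_def by blast+

definition unit_in :: "'a::field set \<Rightarrow> 'a \<Rightarrow> bool" where
  "unit_in R z \<longleftrightarrow> z \<in> R \<and> z \<noteq> 0 \<and> inverse z \<in> R"

lemma unit_mult:
  assumes "is_subring R" "unit_in R a" "unit_in R b"
  shows "unit_in R (a*b)"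
  using assms unfolding unit_in_def is_subring_def by (auto simp: inverse_mult_distrib)

lemma local_from_key:
  fixes R :: "'a::field set"
  assumes R: "is_subring R" and key: "\<forall>e\<in>R. unit_in R e \<or> unit_in R (1-e)"
  shows "local_subring R"
proof -
  define M where "M = {z\<in>R. \<not> unit_in R z}"
  have R0: "0 \<in> R" and R1: "1 \<in> R" and Radd: "\<And>x y. x\<in>R \<Longrightarrow> y\<in>R \<Longrightarrow> x+y\<in>R"
    and Rsub: "\<And>x y. x\<in>R \<Longrightarrow> y\<in>R \<Longrightarrow> x-y\<in>R" and Rmul: "\<And>x y. x\<in>R \<Longrightarrow> y\<in>R \<Longrightarrow> x*y\<in>R"
    using R unfolding is_subring_def by auto
  have mulM: "r * z \<in> M" if "r \<in> R" "z \<in> M" for r z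
  proof -
    have "r*z \<in> R" using that Rmul M_def by auto
    moreover have "\<not> unit_in R (r*z)"
    proof
      assume u: "unit_in R (r*z)"
      then have "r \<noteq> 0" "z \<noteq> 0" unfolding unit_in_def by auto
      then have "inverse z = r * inverse (r*z)" by (simp add: inverse_mult_distrib)
      moreover have "r * inverse (r*z) \<in> R" using u that Rmul unfolding unit_in_def by auto
      ultimately have "inverse z \<in> R" by metis
      then have "unit_in R z" using that \<open>z\<noteq>0\<close> unfolding unit_in_def M_def by auto
      then show False using that M_def by auto
    qed
    ultimately show ?thesis using M_def by auto
  qed
  have addM: "x + y \<in> M" if "x \<in> M" "y \<in> M" for x y
  proof -
    have xy: "x \<in> R" "y \<in> R" using that M_def by auto
    have "\<not> unit_in R (x+y)"
    proof
      assume u: "unit_in R (x+y)"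
      define v where "v = inverse (x+y)"
      have v: "v \<in> R" "(x+y) * v = 1" using u unfolding unit_in_def v_def by auto
      have e: "x*v \<in> R" using xy v Rmul by auto
      have "1 - x*v = y*v" using v(2) by (simp add: algebra_simps)
      have "unit_in R (x+y)" using u .
      from key e have "unit_in R (x*v) \<or> unit_in R (y*v)" using \<open>1 - x*v = y*v\<close> by auto
      then show False
      proof
        assume "unit_in R (x*v)"
        then have "unit_in R ((x*v)*(x+y))" using unit_mult[OF R] u by blast
        moreover have "(x*v)*(x+y) = x*((x+y)*v)" by (simp add: ac_simps)
        then have "(x*v)*(x+y) = x" using v(2) by simp
        ultimately show False using that M_def by auto
      next
        assume "unit_in R (y*v)"
        then have "unit_in R ((y*v)*(x+y))" using unit_mult[OF R] u by blast
        moreover have "(y*v)*(x+y) = y*((x+y)*v)" by (simp add: ac_simps)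
        then have "(y*v)*(x+y) = y" using v(2) by simp
        ultimately show False using that M_def by auto
      qed
    qed
    then show ?thesis using xy Radd M_def by auto
  qed
  have m1: "-1 \<in> R" using Rsub[OF R0 R1] by simp
  have subM: "x - y \<in> M" if "x \<in> M" "y \<in> M" for x y
  proof -
    have "x - y = x + (-1) * y" by simp
    then show ?thesis using addM mulM m1 that by metis
  qed
  have zM: "0 \<in> M" using R0 unfolding M_def unit_in_def by auto
  have idM: "is_ideal_of R M" unfolding is_ideal_of_def using zM addM subM mulM M_def by auto
  have oneM: "1 \<notin> M" using R1 unfolding M_def unit_in_def by auto
  have proper: "I \<subseteq> M" if "is_ideal_of R I" "I \<noteq> R" for I
  proof
    fix z assume z: "z \<in> I"
    show "z \<in> M"
    proof (rule ccontr)
      assume "z \<notin> M"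
      then have u: "unit_in R z" using z that(1) M_def unfolding is_ideal_of_def by auto
      then have "inverse z * z \<in> I" using z that(1) unfolding is_ideal_of_def unit_in_def by blast
      then have "1 \<in> I" using u unfolding unit_in_def by simp
      then have "R \<subseteq> I" using that(1) unfolding is_ideal_of_def by (metis mult.right_neutral subsetI)
      then show False using that unfolding is_ideal_of_def by auto
    qed
  qed
  have maxM: "maximal_ideal_of R M"
    unfolding maximal_ideal_of_def using idM oneM R1 proper by blast
  show ?thesis unfolding local_subring_def
  proof (rule ex1I[of _ M])
    show "maximal_ideal_of R M" by (rule maxM)
  next
    fix N assume N: "maximal_ideal_of R N"
    then have "N \<subseteq> M" using proper unfolding maximal_ideal_of_def by auto
    then have "M = N \<or> M = R" using N idM unfolding maximal_ideal_of_def by auto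
    then show "N = M" using oneM R1 by auto
  qed
qed


lemma key_lemma:
  fixes A P Q :: "'a::field set" and n :: nat
  assumes A: "is_subring A" and cl: "adically_closed (2 * n) A"
    and P: "prime_ideal_of A P" and Q: "prime_ideal_of A Q"
  defines "R \<equiv> join_ring (localization A P) (localization A Q)"
  shows "\<forall>e\<in>R. unit_in R e \<or> unit_in R (1 - e)"
proof -
  have A0: "0 \<in> A" and A1: "1 \<in> A" and Aadd: "\<And>x y. x\<in>A \<Longrightarrow> y\<in>A \<Longrightarrow> x+y\<in>A"
    and Asub: "\<And>x y. x\<in>A \<Longrightarrow> y\<in>A \<Longrightarrow> x-y\<in>A" and Amul: "\<And>x y. x\<in>A \<Longrightarrow> y\<in>A \<Longrightarrow> x*y\<in>A"
    using A unfolding is_subring_def by auto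
  note PP = prime_props[OF P] and QQ = prime_props[OF Q]
  have Rs: "is_subring R" unfolding R_def by (rule join_subring)
  have LP: "localization A P \<subseteq> R" unfolding R_def by (rule join_sub1)
  have LQ: "localization A Q \<subseteq> R" unfolding R_def by (rule join_sub2)
  define T where "T = {a/(s*t) | a s t. a\<in>A \<and> s\<in>A \<and> s\<notin>P \<and> t\<in>A \<and> t\<notin>Q}"
  have nzP: "s \<noteq> 0" if "s \<notin> P" for s using that PP(2) by auto
  have nzQ: "s \<noteq> 0" if "s \<notin> Q" for s using that QQ(2) by auto
  have mulP: "s*s' \<notin> P" if "s\<in>A" "s'\<in>A" "s\<notin>P" "s'\<notin>P" for s s' using PP(7) that by blast
  have mulQ: "s*s' \<notin> Q" if "s\<in>A" "s'\<in>A" "s\<notin>Q" "s'\<notin>Q" for s s' using QQ(7) that by blast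
  have Tsub: "is_subring T"
  proof -
    have "0 \<in> T" unfolding T_def using A0 A1 PP(3) QQ(3) by (intro CollectI exI[of _ 0] exI[of _ 1]) simp
    moreover have "1 \<in> T" unfolding T_def using A0 A1 PP(3) QQ(3) by (intro CollectI exI[of _ 1]) simp
    moreover have "x + y \<in> T \<and> x - y \<in> T \<and> x * y \<in> T" if "x \<in> T" "y \<in> T" for x y
    proof -
      obtain a s t where x: "x = a/(s*t)" "a\<in>A" "s\<in>A" "s\<notin>P" "t\<in>A" "t\<notin>Q" using \<open>x\<in>T\<close> T_def by auto
      obtain b s' t' where y: "y = b/(s'*t')" "b\<in>A" "s'\<in>A" "s'\<notin>P" "t'\<in>A" "t'\<notin>Q" using \<open>y\<in>T\<close> T_def by auto
      have nz: "s \<noteq> 0" "t \<noteq> 0" "s' \<noteq> 0" "t' \<noteq> 0" using x y nzP nzQ by auto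
      have d: "s*s' \<in> A" "s*s' \<notin> P" "t*t' \<in> A" "t*t' \<notin> Q" using x y mulP mulQ Amul by auto
      have "x + y = (a*(s'*t') + b*(s*t)) / ((s*s')*(t*t'))" using nz unfolding x(1) y(1) by (simp add: field_simps)
      moreover have "x - y = (a*(s'*t') - b*(s*t)) / ((s*s')*(t*t'))" using nz unfolding x(1) y(1) by (simp add: field_simps)
      moreover have "x * y = (a*b) / ((s*s')*(t*t'))" using nz unfolding x(1) y(1) by (simp add: field_simps)
      moreover have "a*(s'*t') + b*(s*t) \<in> A" "a*(s'*t') - b*(s*t) \<in> A" "a*b \<in> A"
        using x y Amul Aadd Asub by auto
      ultimately show ?thesis unfolding T_def using d by blast
    qed
    ultimately show ?thesis unfolding is_subring_def by blast
  qed
  have "localization A P \<subseteq> T"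
  proof
    fix z assume "z \<in> localization A P"
    then obtain a s where "z = a/s" "a\<in>A" "s\<in>A" "s\<notin>P" unfolding localization_def by auto
    then show "z \<in> T" unfolding T_def using A1 QQ(3) by (intro CollectI exI[of _ a] exI[of _ s] exI[of _ 1]) simp
  qed
  moreover have "localization A Q \<subseteq> T"
  proof
    fix z assume "z \<in> localization A Q"
    then obtain a s where "z = a/s" "a\<in>A" "s\<in>A" "s\<notin>Q" unfolding localization_def by auto
    then show "z \<in> T" unfolding T_def using A1 PP(3) by (intro CollectI exI[of _ a] exI[of _ 1] exI[of _ s]) simp
  qed
  ultimately have RT: "R \<subseteq> T" unfolding R_def using join_least Tsub by blast
  have unit_frac: "unit_in R (c/(s*t))" if c: "c\<in>A" "s\<in>A" "s\<notin>P" "t\<in>A" "t\<notin>Q" "c\<notin>P \<or> c\<notin>Q" for c s t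
  proof -
    have nz: "s \<noteq> 0" "t \<noteq> 0" "c \<noteq> 0" using c nzP nzQ PP(2) by auto
    have "c/s \<in> R" using LP c unfolding localization_def by blast
    moreover have "1/t \<in> R" using LQ c A1 unfolding localization_def by blast
    ultimately have "(c/s)*(1/t) \<in> R" using Rs unfolding is_subring_def by blast
    then have m: "c/(s*t) \<in> R" by simp
    have "(s*t)/c \<in> R"
    proof (cases "c \<notin> P")
      case True then show ?thesis using LP c Amul unfolding localization_def by blast
    next
      case False then show ?thesis using LQ c Amul unfolding localization_def by blast
    qed
    then show ?thesis using m nz unfolding unit_in_def by simp
  qed
  show ?thesis
  proof
    fix e assume "e \<in> R"
    then obtain E s t where e: "e = E/(s*t)" "E\<in>A" "s\<in>A" "s\<notin>P" "t\<in>A" "t\<notin>Q" using RT T_def by auto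
    have nz: "s \<noteq> 0" "t \<noteq> 0" using e nzP nzQ by auto
    define F where "F = s*t - E"
    have FA: "F \<in> A" using F_def e Amul Asub by auto
    have e1: "1 - e = F/(s*t)" using nz e F_def by (simp add: field_simps)
    show "unit_in R e \<or> unit_in R (1 - e)"
    proof (cases "E \<in> P \<and> E \<in> Q \<and> F \<in> P \<and> F \<in> Q")
      case False
      then show ?thesis using unit_frac[of E s t] unit_frac[of F s t] e e1 FA by auto
    next
      case True
      have st: "s*t = E + F" using F_def by simp
      have "s*t \<in> P" "s*t \<in> Q" using True st PP(4) QQ(4) by auto
      then have tP: "t \<in> P" and sQ: "s \<in> Q" using PP(7) QQ(7) e by blast+
      define g where "g = [:E, -(s+t), 1:]"
      have g0: "g \<noteq> 0" unfolding g_def by simp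
      have dg: "degree g = 2" unfolding g_def by simp
      have cg: "\<forall>i. coeff g i \<in> A"
      proof
        fix i
        have "- (s+t) \<in> A" using Asub[OF A0] Aadd e by (metis diff_0)
        then show "coeff g i \<in> A" unfolding g_def using e A0 A1
          by (cases i; cases "i - 1"; cases "i - 2"; simp add: coeff_pCons split: nat.split)
      qed
      have "degree (g^n) = 2*n" using degree_power_eq[OF g0] dg by simp
      moreover have "lead_coeff (g^n) = 1" using dg by (simp add: lead_coeff_power g_def)
      moreover have "\<forall>i. coeff (g^n) i \<in> A" using subring_coeff_power[OF A cg] by blast
      ultimately obtain x where x: "x \<in> A" "poly (g^n) x = 0" using cl unfolding adically_closed_def by blast
      then have px: "poly g x = 0" by simp
      define y where "y = s + t - x"
      have yA: "y \<in> A" using y_def x e Aadd Asub by auto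
      have "E - (s+t)*x + x*x = 0" using px unfolding g_def by (simp add: algebra_simps)
      then have xy: "x*y = E" unfolding y_def by (simp add: algebra_simps)
      have xs: "(x-s)*(s-y) = F" unfolding F_def using xy[symmetric] unfolding y_def by (simp add: algebra_simps)
      have c1: "(x \<in> P \<and> x \<in> Q) \<or> (y \<in> P \<and> y \<in> Q) \<or> unit_in R e"
      proof (cases "(x \<in> P \<and> x \<in> Q) \<or> (y \<in> P \<and> y \<in> Q)")
        case False
        have "unit_in R (x/(s*1))" using unit_frac[of x s 1] x e A1 QQ(3) False by auto
        moreover have "unit_in R (y/(1*t))" using unit_frac[of y 1 t] yA e A1 PP(3) False by auto
        ultimately have "unit_in R ((x/(s*1))*(y/(1*t)))" using unit_mult[OF Rs] by blast
        moreover have "(x/(s*1))*(y/(1*t)) = e" using e xy by simp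
        ultimately show ?thesis by simp
      qed auto
      have xsA: "x - s \<in> A" "s - y \<in> A" using x yA e Asub by auto
      have c2: "(x-s \<in> P \<and> x-s \<in> Q) \<or> (s-y \<in> P \<and> s-y \<in> Q) \<or> unit_in R (1-e)"
      proof (cases "(x-s \<in> P \<and> x-s \<in> Q) \<or> (s-y \<in> P \<and> s-y \<in> Q)")
        case False
        have "unit_in R ((x-s)/(s*1))" using unit_frac[of "x-s" s 1] xsA e A1 QQ(3) False by auto
        moreover have "unit_in R ((s-y)/(1*t))" using unit_frac[of "s-y" 1 t] xsA e A1 PP(3) False by auto
        ultimately have "unit_in R (((x-s)/(s*1))*((s-y)/(1*t)))" using unit_mult[OF Rs] by blast
        moreover have "((x-s)/(s*1))*((s-y)/(1*t)) = 1 - e" using e1 xs by simp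
        ultimately show ?thesis by simp
      qed auto
      have tdef: "t = x + y - s" unfolding y_def by simp
      have False if "x \<in> P" "x \<in> Q" "x-s \<in> P"
        using PP(5)[OF that(1) that(3)] e by simp
      moreover have False if "x \<in> Q" "s-y \<in> Q"
      proof -
        have "x - (s - y) \<in> Q" using QQ(5) that by blast
        then show False using e tdef by (simp add: algebra_simps)
      qed
      moreover have False if "y \<in> Q" "x-s \<in> Q"
      proof -
        have "(x - s) + y \<in> Q" using QQ(4) that by blast
        then show False using e tdef by (simp add: algebra_simps)
      qed
      moreover have False if "y \<in> P" "s-y \<in> P"
      proof -
        have "(s - y) + y \<in> P" using PP(4) that by blast
        then show False using e by simp
      qed
      ultimately show ?thesis using c1 c2 by blast
    qed
  qed
qed

theorem mainTheorem6:
  fixes A :: "'a::field set" and P Q :: "'a set" and n :: nat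
  assumes "is_subring A"
    and "\<forall>x. \<exists>a\<in>A. \<exists>b\<in>A. b \<noteq> 0 \<and> x = a / b"
    and "adically_closed (2 * n) A"
    and "prime_ideal_of A P" and "prime_ideal_of A Q"
  shows "local_subring (join_ring (localization A P) (localization A Q))"
  by (rule local_from_key[OF join_subring key_lemma[OF assms(1,3,4,5)]])

end
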